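(* Let $W$ be an irreducible euclidean Coxeter group not of type $\widetilde A_n$ and $\sigma$ a chamber of its Coxeter complex with closest points $x_0,x_1$, bipartite line $L$ and bipartite involutions $w_0,w_1$. Then for $i\in\{0,1\}$, $w_i$ stabilizes $L$ and restricts to a reflection of $L$ fixing only the point $x_i$.
   Context: $W$ acts on a euclidean space $E$, generated by reflections in the facets of a euclidean simplex with dihedral angles submultiples of $\pi$, properly and cocompactly; chambers are images of the simplex. The diagram $\Gamma$ (a tree) has a unique bipartition, giving a partition $S_0\sqcup S_1$ of the reflections in the facets of $\sigma$ into pairwise-commuting sets; the bipartite involution $w_j$ is the product of the reflections in $S_j$. $F_j$ is the face of $\sigma$ cut out by the hyperplanes of the reflections in $S_j$, $B_j$ its affine hull; $x_0\in B_0$, $x_1\in B_1$ are the unique points realizing the distance between $B_0$ and $B_1$, and $L$ is the line through them. *)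

theory Defs
  imports "HOL-Analysis.Analysis"
begin

text \<open>A euclidean simplex in E = 'a (with DIM('a) = N) is given by N+1 unit inward
  normals u i and offsets c i, i in {0..N}: sigma = {x. for all i, u i \<bullet> x \<ge> c i}.\<close>

definition simplex_of :: "nat \<Rightarrow> (nat \<Rightarrow> 'a::euclidean_space) \<Rightarrow> (nat \<Rightarrow> real) \<Rightarrow> 'a set" where
  "simplex_of N u c = {x. \<forall>i\<in>{0..N}. c i \<le> u i \<bullet> x}"

definition hreflect :: "'a::euclidean_space \<Rightarrow> real \<Rightarrow> 'a \<Rightarrow> 'a" where
  "hreflect v d x = x - (2 * (v \<bullet> x - d) / (v \<bullet> v)) *\<^sub>R v"

text \<open>Dihedral angles are submultiples of pi: the angle between facets i and j is
  pi/m (m \<ge> 2 an integer), i.e. u i \<bullet> u j = - cos(pi/m); parallel facets (m = infinity,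
  angle 0) give u i \<bullet> u j = -1.\<close>
definition coxeter_angles :: "nat \<Rightarrow> (nat \<Rightarrow> 'a::euclidean_space) \<Rightarrow> bool" where
  "coxeter_angles N u \<longleftrightarrow> (\<forall>i\<in>{0..N}. \<forall>j\<in>{0..N}. i \<noteq> j \<longrightarrow>
      ((\<exists>m::nat. m \<ge> 2 \<and> u i \<bullet> u j = - cos (pi / real m)) \<or> u i \<bullet> u j = -1))"

definition coxeter_simplex :: "nat \<Rightarrow> (nat \<Rightarrow> 'a::euclidean_space) \<Rightarrow> (nat \<Rightarrow> real) \<Rightarrow> bool" where
  "coxeter_simplex N u c \<longleftrightarrow> (\<forall>i\<in>{0..N}. norm (u i) = 1)
     \<and> bounded (simplex_of N u c) \<and> interior (simplex_of N u c) \<noteq> {}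
     \<and> coxeter_angles N u"

text \<open>Coxeter diagram: vertices {0..N}, edge i--j iff m_ij \<ge> 3, i.e. u i \<bullet> u j \<noteq> 0.\<close>
definition diagram_edges :: "nat \<Rightarrow> (nat \<Rightarrow> 'a::euclidean_space) \<Rightarrow> (nat \<times> nat) set" where
  "diagram_edges N u = {(i,j). i \<in> {0..N} \<and> j \<in> {0..N} \<and> i \<noteq> j \<and> u i \<bullet> u j \<noteq> 0}"

definition irreducible_diagram :: "nat \<Rightarrow> (nat \<Rightarrow> 'a::euclidean_space) \<Rightarrow> bool" where
  "irreducible_diagram N u \<longleftrightarrow> (\<forall>i\<in>{0..N}. \<forall>j\<in>{0..N}. (i,j) \<in> (diagram_edges N u)\<^sup>*)"

text \<open>Type A-tilde_n: for N = 1 the (only) Coxeter matrix m_01 = infinity; for N \<ge> 2 the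
  Coxeter matrix is, after relabelling, that of an (N+1)-cycle with all labels 3.\<close>
definition type_A_tilde :: "nat \<Rightarrow> (nat \<Rightarrow> 'a::euclidean_space) \<Rightarrow> bool" where
  "type_A_tilde N u \<longleftrightarrow> (N = 1 \<and> u 0 \<bullet> u 1 = -1) \<or>
     (N \<ge> 2 \<and> (\<exists>f. bij_betw f {0..N} {0..N} \<and>
        (\<forall>k\<in>{0..N}. \<forall>l\<in>{0..N}. k \<noteq> l \<longrightarrow>
           u (f k) \<bullet> u (f l) = (if l = (k + 1) mod (N + 1) \<or> k = (l + 1) mod (N + 1)
                                 then - cos (pi / 3) else 0))))"

text \<open>Product of the reflections in the facets indexed by S (they pairwise commute, so the
  order is irrelevant; we use increasing order).\<close>
definition bip_inv :: "(nat \<Rightarrow> 'a::euclidean_space) \<Rightarrow> (nat \<Rightarrow> real) \<Rightarrow> nat set \<Rightarrow> 'a \<Rightarrow> 'a" where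
  "bip_inv u c S = foldr (\<lambda>i f. hreflect (u i) (c i) \<circ> f) (sorted_list_of_set S) id"

definition face_cut :: "nat \<Rightarrow> (nat \<Rightarrow> 'a::euclidean_space) \<Rightarrow> (nat \<Rightarrow> real) \<Rightarrow> nat set \<Rightarrow> 'a set" where
  "face_cut N u c S = simplex_of N u c \<inter> {x. \<forall>i\<in>S. u i \<bullet> x = c i}"

end

theory Submission
  imports Defs
begin


lemma hreflect_unit: "norm a = 1 \<Longrightarrow> hreflect a d x = x - (2 * (a \<bullet> x - d)) *\<^sub>R a"
  unfolding hreflect_def by (simp add: power2_norm_eq_inner[symmetric])

lemma strict_interior:
  assumes "p \<in> interior (simplex_of N u c)" "i \<in> {0..N}" "norm (u i) = 1"
  shows "c i < u i \<bullet> p"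
proof -
  obtain e where e: "e > 0" "ball p e \<subseteq> simplex_of N u c" using assms(1) mem_interior by blast
  have "p - (e/2) *\<^sub>R u i \<in> ball p e" using e assms(3) by (simp add: dist_norm)
  then have "p - (e/2) *\<^sub>R u i \<in> simplex_of N u c" using e by blast
  then have "c i \<le> u i \<bullet> (p - (e/2) *\<^sub>R u i)" using assms(2) unfolding simplex_of_def by blast
  also have "\<dots> = u i \<bullet> p - e/2" using assms(3) by (simp add: inner_diff_right power2_norm_eq_inner[symmetric])
  finally show ?thesis using e by linarith
qed

lemma unbounded_dir:
  assumes "p \<in> simplex_of N u c" "w \<noteq> 0" "\<forall>i\<in>{0..N}. 0 \<le> u i \<bullet> w"
  shows "\<not> bounded (simplex_of N u c)"
proof
  assume "bounded (simplex_of N u c)"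
  then obtain B where B: "\<forall>x\<in>simplex_of N u c. norm x \<le> B" by (auto simp: bounded_iff)
  have nw: "norm w > 0" using assms(2) by simp
  have Bp: "norm p \<le> B" using B assms(1) by blast
  define t where "t = (B + norm p + 1) / norm w"
  have t0: "t \<ge> 0" unfolding t_def using nw Bp by (intro divide_nonneg_pos) (use norm_ge_zero[of p] in linarith)+
  have "p + t *\<^sub>R w \<in> simplex_of N u c"
  proof -
    { fix i assume i: "i \<in> {0..N}"
      have "c i \<le> u i \<bullet> p" using assms(1) i unfolding simplex_of_def by blast
      moreover have "0 \<le> t * (u i \<bullet> w)" using t0 assms(3) i by simp
      ultimately have "c i \<le> u i \<bullet> (p + t *\<^sub>R w)" by (simp add: inner_add_right) }
    then show ?thesis unfolding simplex_of_def by blast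
  qed
  then have "norm (p + t *\<^sub>R w) \<le> B" using B by blast
  moreover have "norm (p + t *\<^sub>R w) \<ge> t * norm w - norm p"
    using norm_triangle_ineq2[of "t *\<^sub>R w" "-p"] t0 by (simp add: algebra_simps)
  moreover have "t * norm w = B + norm p + 1" unfolding t_def using nw by simp
  ultimately show False by linarith
qed

lemma F1:
  assumes "p \<in> interior (simplex_of N u c)" "bounded (simplex_of N u c)"
    "k \<in> {0..N}" "\<forall>i\<in>{0..N}-{k}. u i \<bullet> w = 0"
  shows "w = 0"
proof (rule ccontr)
  assume w: "w \<noteq> 0"
  have p: "p \<in> simplex_of N u c" using assms(1) interior_subset by blast
  show False
  proof (cases "0 \<le> u k \<bullet> w")
    case True
    then have "\<forall>i\<in>{0..N}. 0 \<le> u i \<bullet> w" using assms(4) by (metis Diff_iff empty_iff insert_iff order_refl)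
    then show False using unbounded_dir[OF p w] assms(2) by blast
  next
    case False
    then have "\<forall>i\<in>{0..N}. 0 \<le> u i \<bullet> (-w)" using assms(4) by (metis Diff_iff empty_iff insert_iff inner_minus_right neg_0_le_iff_le linear order_refl)
    then show False using unbounded_dir[OF p] w assms(2) by (metis neg_equal_0_iff_equal)
  qed
qed

lemma sum_basis_inner:
  assumes "bij_betw \<pi> I Basis" "j \<in> I" "finite I"
  shows "(\<Sum>i\<in>I. a i *\<^sub>R \<pi> i) \<bullet> (\<pi> j :: 'a::euclidean_space) = a j"
proof -
  have "(\<Sum>i\<in>I. a i *\<^sub>R \<pi> i) \<bullet> \<pi> j = (\<Sum>i\<in>I. a i * (\<pi> i \<bullet> \<pi> j))"
    by (simp add: inner_sum_left)
  also have "\<dots> = (\<Sum>i\<in>I. if i = j then a i else 0)"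
  proof (rule sum.cong)
    fix i assume i: "i \<in> I"
    have "\<pi> i \<in> Basis" "\<pi> j \<in> Basis" using assms i by (auto simp: bij_betw_def)
    moreover have "\<pi> i = \<pi> j \<longleftrightarrow> i = j" using assms(1,2) i by (auto simp: bij_betw_def inj_on_def)
    ultimately show "a i * (\<pi> i \<bullet> \<pi> j) = (if i = j then a i else 0)" by (auto simp: inner_Basis)
  qed simp
  also have "\<dots> = a j" using assms by simp
  finally show ?thesis .
qed

lemma vertex_exists:
  assumes N: "N = DIM('a::euclidean_space)" and k: "k \<in> {0..N}"
    and F: "\<forall>w::'a. (\<forall>i\<in>{0..N}-{k}. u i \<bullet> w = 0) \<longrightarrow> w = 0"
  shows "\<exists>v::'a. \<forall>i\<in>{0..N}-{k}. u i \<bullet> v = c i"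
proof -
  define I where "I = {0..N}-{k}"
  have fI: "finite I" unfolding I_def by simp
  have cI: "card I = card (Basis::'a set)" unfolding I_def using k N by simp
  obtain \<pi> where pi: "bij_betw \<pi> I (Basis::'a set)" using finite_same_card_bij[OF fI _ cI] by auto
  define g where "g x = (\<Sum>i\<in>I. (u i \<bullet> x) *\<^sub>R \<pi> i)" for x :: 'a
  have lin: "linear g"
    by (rule linearI) (simp_all add: g_def inner_add_right scaleR_add_left sum.distrib scaleR_sum_right)
  have gi: "g x \<bullet> \<pi> j = u j \<bullet> x" if "j \<in> I" for x j
    unfolding g_def using sum_basis_inner[OF pi that fI] .
  have "inj g"
    unfolding linear_injective_0[OF lin]
  proof (intro allI impI)
    fix x assume "g x = 0"
    then have "\<forall>i\<in>I. u i \<bullet> x = 0" using gi by (metis inner_zero_left)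
    then show "x = 0" using F unfolding I_def by blast
  qed
  then have "surj g" using lin eucl.linear_inj_imp_surj by blast
  then obtain x where x: "g x = (\<Sum>i\<in>I. c i *\<^sub>R \<pi> i)" by (metis surjD)
  have "\<forall>i\<in>I. u i \<bullet> x = c i"
  proof
    fix i assume i: "i \<in> I"
    have "u i \<bullet> x = g x \<bullet> \<pi> i" using gi[OF i] by simp
    also have "\<dots> = c i" unfolding x using sum_basis_inner[OF pi i fI] .
    finally show "u i \<bullet> x = c i" .
  qed
  then show ?thesis unfolding I_def by blast
qed

lemma vertex_strict:
  assumes "p \<in> interior (simplex_of N u c)" "bounded (simplex_of N u c)"
    "\<forall>i\<in>{0..N}. norm (u i) = 1" "k \<in> {0..N}" "\<forall>i\<in>{0..N}-{k}. u i \<bullet> v = c i"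
  shows "c k < u k \<bullet> v"
proof (rule ccontr)
  assume "\<not> c k < u k \<bullet> v"
  then have vk: "u k \<bullet> v \<le> c k" by simp
  have p: "p \<in> simplex_of N u c" using assms(1) interior_subset by blast
  have pos: "\<forall>i\<in>{0..N}. 0 < u i \<bullet> (p - v)"
  proof
    fix i assume i: "i \<in> {0..N}"
    have "c i < u i \<bullet> p" using strict_interior[OF assms(1) i] assms(3) i by blast
    moreover have "u i \<bullet> v \<le> c i" using assms(5) vk i by (cases "i = k") auto
    ultimately show "0 < u i \<bullet> (p - v)" by (simp add: inner_diff_right)
  qed
  then have "p - v \<noteq> 0" using assms(4) by fastforce
  then show False using unbounded_dir[OF p] pos assms(2) by (meson less_imp_le)
qed



lemma commute_rel:
  assumes "norm a = 1" "norm b = 1" "hreflect a d \<circ> hreflect b e = hreflect b e \<circ> hreflect a d"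
  shows "(a \<bullet> b) *\<^sub>R ((b \<bullet> x - e) *\<^sub>R a - (a \<bullet> x - d) *\<^sub>R b) = 0"
proof -
  define \<alpha> where "\<alpha> = a \<bullet> x - d"
  define \<beta> where "\<beta> = b \<bullet> x - e"
  have aa: "a \<bullet> a = 1" "b \<bullet> b = 1" using assms by (simp_all add: power2_norm_eq_inner[symmetric])
  have L: "(hreflect a d \<circ> hreflect b e) x = x - (2*\<beta>) *\<^sub>R b - (2*\<alpha>) *\<^sub>R a + (4*\<beta>*(a \<bullet> b)) *\<^sub>R a"
    using assms(1,2) by (simp add: hreflect_unit \<alpha>_def \<beta>_def inner_diff_right algebra_simps)
  have R: "(hreflect b e \<circ> hreflect a d) x = x - (2*\<alpha>) *\<^sub>R a - (2*\<beta>) *\<^sub>R b + (4*\<alpha>*(a \<bullet> b)) *\<^sub>R b"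
    using assms(1,2) by (simp add: hreflect_unit \<alpha>_def \<beta>_def inner_diff_right algebra_simps inner_commute)
  have "(4*\<beta>*(a \<bullet> b)) *\<^sub>R a = (4*\<alpha>*(a \<bullet> b)) *\<^sub>R b" using L R assms(3) by (simp add: algebra_simps)
  then have "4 *\<^sub>R ((a \<bullet> b) *\<^sub>R (\<beta> *\<^sub>R a - \<alpha> *\<^sub>R b)) = 0" by (simp add: algebra_simps)
  then show ?thesis unfolding \<alpha>_def \<beta>_def by simp
qed

lemma foldr_refl:
  assumes "distinct xs" "\<forall>i\<in>set xs. norm (u i) = 1"
    "\<forall>i\<in>set xs. \<forall>k\<in>set xs. i \<noteq> k \<longrightarrow> u i \<bullet> u k = 0"
  shows "foldr (\<lambda>i f. hreflect (u i) (c i) \<circ> f) xs id y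
      = y - (\<Sum>i\<in>set xs. (2 * (u i \<bullet> y - c i)) *\<^sub>R u i)"
  using assms
proof (induction xs)
  case Nil
  then show ?case by simp
next
  case (Cons a xs)
  define z where "z = y - (\<Sum>i\<in>set xs. (2 * (u i \<bullet> y - c i)) *\<^sub>R u i)"
  have IH: "foldr (\<lambda>i f. hreflect (u i) (c i) \<circ> f) xs id y = z"
    unfolding z_def by (rule Cons.IH) (use Cons.prems in auto)
  have na: "a \<notin> set xs" using Cons by simp
  have "u a \<bullet> (\<Sum>i\<in>set xs. (2 * (u i \<bullet> y - c i)) *\<^sub>R u i) = 0"
    unfolding inner_sum_right using Cons.prems(3) na by (intro sum.neutral) auto
  then have az: "u a \<bullet> z = u a \<bullet> y" unfolding z_def by (simp add: inner_diff_right)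
  have "foldr (\<lambda>i f. hreflect (u i) (c i) \<circ> f) (a # xs) id y = hreflect (u a) (c a) z"
    using IH by simp
  also have "\<dots> = z - (2 * (u a \<bullet> y - c a)) *\<^sub>R u a" using Cons.prems(2) az by (simp add: hreflect_unit)
  also have "\<dots> = y - (\<Sum>i\<in>set (a # xs). (2 * (u i \<bullet> y - c i)) *\<^sub>R u i)"
    unfolding z_def using na by (simp add: algebra_simps)
  finally show ?case .
qed

lemma min_orth:
  fixes v z :: "'a::real_inner"
  assumes "\<forall>t::real. norm v \<le> norm (v - t *\<^sub>R z)"
  shows "v \<bullet> z = 0"
proof -
  define a where "a = z \<bullet> z"
  define b where "b = v \<bullet> z"
  have a0: "a \<ge> 0" unfolding a_def by simp
  have key: "0 \<le> t*t*a - 2*t*b" for t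
  proof -
    have "norm v ^2 \<le> norm (v - t *\<^sub>R z) ^2" using assms norm_ge_zero power_mono by blast
    then show ?thesis unfolding a_def b_def
      by (simp add: power2_norm_eq_inner inner_diff_left inner_diff_right inner_commute algebra_simps)
  qed
  define t where "t = b/(a+1)"
  have bt: "b = t*(a+1)" unfolding t_def using a0 by simp
  have "0 \<le> t*t*a - 2*t*(t*(a+1))" using key[of t] bt by simp
  then have "t*t*(a+2) \<le> 0" by (simp add: algebra_simps)
  moreover have "t*t \<ge> 0" by simp
  moreover have "a + 2 > 0" using a0 by simp
  ultimately have "t*t = 0" by (smt (verit) mult_pos_pos)
  then have "b * b \<le> 0" using bt by simp
  then show ?thesis unfolding b_def by (metis mult_eq_0_iff zero_le_square antisym)
qed

lemma in_span_orth:
  assumes fin: "finite S" and n: "\<forall>i\<in>S. norm (u i) = 1"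
    and o: "\<forall>i\<in>S. \<forall>k\<in>S. i \<noteq> k \<longrightarrow> u i \<bullet> u k = 0"
    and perp: "\<forall>z. (\<forall>i\<in>S. u i \<bullet> z = 0) \<longrightarrow> v \<bullet> z = 0"
  shows "v = (\<Sum>i\<in>S. (u i \<bullet> v) *\<^sub>R u i)"
proof -
  define r where "r = v - (\<Sum>i\<in>S. (u i \<bullet> v) *\<^sub>R u i)"
  have ur: "u k \<bullet> r = 0" if k: "k \<in> S" for k
  proof -
    have "u k \<bullet> (\<Sum>i\<in>S. (u i \<bullet> v) *\<^sub>R u i) = (\<Sum>i\<in>S. if i = k then u k \<bullet> v else 0)"
      unfolding inner_sum_right
    proof (rule sum.cong)
      fix i assume i: "i \<in> S"
      show "u k \<bullet> (u i \<bullet> v) *\<^sub>R u i = (if i = k then u k \<bullet> v else 0)"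
        using o i k n by (auto simp: power2_norm_eq_inner[symmetric] inner_commute)
    qed simp
    also have "\<dots> = u k \<bullet> v" using k fin by simp
    finally show ?thesis unfolding r_def by (simp add: inner_diff_right)
  qed
  have vr: "v \<bullet> r = 0" using perp ur by blast
  have sr: "(\<Sum>i\<in>S. (u i \<bullet> v) *\<^sub>R u i) \<bullet> r = 0"
    unfolding inner_sum_left using ur by simp
  have "r \<bullet> r = (v - (\<Sum>i\<in>S. (u i \<bullet> v) *\<^sub>R u i)) \<bullet> r" by (metis r_def)
  then have "r \<bullet> r = 0" using vr sr by (simp add: inner_diff_left)
  then have "r = 0" by simp
  then show ?thesis unfolding r_def by simp
qed



lemma aff_move:
  fixes y q z :: "'a::real_vector"
  assumes A: "affine A" and y: "y \<in> A" and q1: "q + d *\<^sub>R z \<in> A" and q2: "q - d *\<^sub>R z \<in> A" and d: "d > 0"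
  shows "y + t *\<^sub>R z \<in> A"
proof -
  define \<mu> where "\<mu> = t / d"
  have s1: "2 *\<^sub>R y + (-1) *\<^sub>R (q - d *\<^sub>R z) \<in> A" using A[unfolded affine_def, rule_format, OF y q2, of 2 "-1"] by simp
  have r1: "(1-\<mu>) *\<^sub>R (q - d *\<^sub>R z) + \<mu> *\<^sub>R (q + d *\<^sub>R z) \<in> A" using A[unfolded affine_def, rule_format, OF q2 q1, of "1-\<mu>" \<mu>] by simp
  have "(1/2) *\<^sub>R (2 *\<^sub>R y + (-1) *\<^sub>R (q - d *\<^sub>R z)) + (1/2) *\<^sub>R ((1-\<mu>) *\<^sub>R (q - d *\<^sub>R z) + \<mu> *\<^sub>R (q + d *\<^sub>R z)) \<in> A"
    using A[unfolded affine_def, rule_format, OF s1 r1, of "1/2" "1/2"] by simp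
  moreover have "(1/2) *\<^sub>R (2 *\<^sub>R y + (-1) *\<^sub>R (q - d *\<^sub>R z)) + (1/2) *\<^sub>R ((1-\<mu>) *\<^sub>R (q - d *\<^sub>R z) + \<mu> *\<^sub>R (q + d *\<^sub>R z))
      = y + (\<mu> * d / 2) *\<^sub>R z + (\<mu> * d / 2) *\<^sub>R z" by (simp add: algebra_simps)
  moreover have "y + (\<mu> * d / 2) *\<^sub>R z + (\<mu> * d / 2) *\<^sub>R z = y + (\<mu> * d) *\<^sub>R z"
    by (metis add.assoc scaleR_add_left field_sum_of_halves)
  moreover have "\<mu> * d = t" unfolding \<mu>_def using d by simp
  ultimately show ?thesis by (metis add.assoc)
qed

theorem lemma8p7:
  fixes u :: "nat \<Rightarrow> 'a::euclidean_space" and c :: "nat \<Rightarrow> real"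
    and S :: "nat \<Rightarrow> nat set" and x :: "nat \<Rightarrow> 'a"
  defines "N \<equiv> DIM('a)"
  assumes simplex: "coxeter_simplex N u c"
    and irred: "irreducible_diagram N u"
    and notA: "\<not> type_A_tilde N u"
    and part: "S 0 \<union> S 1 = {0..N}" "S 0 \<inter> S 1 = {}"
    and comm: "\<forall>j\<in>{0,1}. \<forall>i\<in>S j. \<forall>k\<in>S j.
                 hreflect (u i) (c i) \<circ> hreflect (u k) (c k) = hreflect (u k) (c k) \<circ> hreflect (u i) (c i)"
    and closest: "x 0 \<in> affine hull (face_cut N u c (S 0))"
                 "x 1 \<in> affine hull (face_cut N u c (S 1))"
                 "\<forall>a\<in>affine hull (face_cut N u c (S 0)). \<forall>b\<in>affine hull (face_cut N u c (S 1)).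
                    dist (x 0) (x 1) \<le> dist a b"
  shows "\<forall>j\<in>{0::nat,1}.
           bip_inv u c (S j) ` (affine hull {x 0, x 1}) = affine hull {x 0, x 1}
         \<and> (\<forall>y\<in>affine hull {x 0, x 1}. bip_inv u c (S j) y = 2 *\<^sub>R x j - y)
         \<and> {y\<in>affine hull {x 0, x 1}. bip_inv u c (S j) y = y} = {x j}"
proof -
  have hn: "\<forall>i\<in>{0..N}. norm (u i) = 1" and hbd: "bounded (simplex_of N u c)"
    and hint: "interior (simplex_of N u c) \<noteq> {}"
    using simplex unfolding coxeter_simplex_def by auto
  obtain p where p: "p \<in> interior (simplex_of N u c)" using hint by blast
  have "\<forall>k\<in>{0..N}. \<exists>v. (\<forall>i\<in>{0..N}-{k}. u i \<bullet> v = c i) \<and> c k < u k \<bullet> v"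
  proof
    fix k assume k: "k \<in> {0..N}"
    have F: "\<forall>w::'a. (\<forall>i\<in>{0..N}-{k}. u i \<bullet> w = 0) \<longrightarrow> w = 0"
      using F1[OF p hbd k] by blast
    obtain v where v: "\<forall>i\<in>{0..N}-{k}. u i \<bullet> v = c i"
      using vertex_exists[OF N_def[THEN meta_eq_to_obj_eq] k F] by blast
    then show "\<exists>v. (\<forall>i\<in>{0..N}-{k}. u i \<bullet> v = c i) \<and> c k < u k \<bullet> v"
      using vertex_strict[OF p hbd hn k v] by blast
  qed
  then obtain vx where vx: "\<forall>k\<in>{0..N}. (\<forall>i\<in>{0..N}-{k}. u i \<bullet> vx k = c i) \<and> c k < u k \<bullet> vx k"
    by metis
  have vx_eq: "u i \<bullet> vx k = c i" if "k \<in> {0..N}" "i \<in> {0..N}" "i \<noteq> k" for i k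
    using vx that by blast
  have vx_str: "c k < u k \<bullet> vx k" if "k \<in> {0..N}" for k using vx that by blast
  have vx_ge: "c i \<le> u i \<bullet> vx k" if "k \<in> {0..N}" "i \<in> {0..N}" for i k
    using vx_eq[OF that] vx_str[OF that(1)] that by (cases "i = k") auto
  have Ssub: "S j \<subseteq> {0..N}" if "j \<in> {0,1}" for j using part that by auto
  have orth: "u i \<bullet> u k = 0" if j: "j \<in> {0,1}" and ik: "i \<in> S j" "k \<in> S j" "i \<noteq> k" for j i k
  proof (rule ccontr)
    assume ne: "u i \<bullet> u k \<noteq> 0"
    have iN: "i \<in> {0..N}" and kN: "k \<in> {0..N}" using Ssub[OF j] ik by auto
    have cm: "hreflect (u i) (c i) \<circ> hreflect (u k) (c k) = hreflect (u k) (c k) \<circ> hreflect (u i) (c i)"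
      using comm j ik by blast
    have "(u i \<bullet> u k) *\<^sub>R ((u k \<bullet> vx k - c k) *\<^sub>R u i - (u i \<bullet> vx k - c i) *\<^sub>R u k) = 0"
      using commute_rel[OF _ _ cm] hn iN kN by blast
    then have "(u k \<bullet> vx k - c k) *\<^sub>R u i = 0" using ne vx_eq[OF kN iN ik(3)] by simp
    moreover have "u k \<bullet> vx k - c k \<noteq> 0" using vx_str[OF kN] by simp
    ultimately have "u i = 0" by simp
    moreover have "norm (u i) = 1" using hn iN by blast
    ultimately show False by simp
  qed
  have N1: "N \<ge> 1" unfolding N_def using DIM_positive[where 'a='a] by linarith
  have ne: "S 0 \<noteq> {}" "S 1 \<noteq> {}"
  proof -
    have "(0, 1) \<in> (diagram_edges N u)\<^sup>*" using irred N1 unfolding irreducible_diagram_def by auto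
    then obtain y where e: "(0, y) \<in> diagram_edges N u"
      by (metis converse_rtranclE zero_neq_one)
    then have y: "y \<in> {0..N}" "0 \<noteq> y" "u 0 \<bullet> u y \<noteq> 0" unfolding diagram_edges_def by auto
    show "S 0 \<noteq> {}"
    proof
      assume "S 0 = {}"
      then have "S 1 = {0..N}" using part by auto
      then show False using orth[of 1 0 y] y by auto
    qed
    show "S 1 \<noteq> {}"
    proof
      assume "S 1 = {}"
      then have "S 0 = {0..N}" using part by auto
      then show False using orth[of 0 0 y] y by auto
    qed
  qed
  have finS: "finite (S j)" if "j \<in> {0,1}" for j using Ssub[OF that] finite_subset by blast
  have xV: "u i \<bullet> x j = c i" if j: "j \<in> {0,1}" and i: "i \<in> S j" for j i
  proof -
    have aff: "affine {y. \<forall>i\<in>S j. u i \<bullet> y = c i}"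
      unfolding affine_def by (auto simp: inner_add_right) (metis distrib_right mult_1)
    have "face_cut N u c (S j) \<subseteq> {y. \<forall>i\<in>S j. u i \<bullet> y = c i}" unfolding face_cut_def by auto
    then have "affine hull (face_cut N u c (S j)) \<subseteq> {y. \<forall>i\<in>S j. u i \<bullet> y = c i}"
      using aff by (simp add: hull_minimal)
    moreover have "x j \<in> affine hull (face_cut N u c (S j))" using closest j by auto
    ultimately show ?thesis using i by auto
  qed
  have dir: "y + t *\<^sub>R z \<in> affine hull (face_cut N u c (S j))"
    if j: "j \<in> {0,1}" and z: "\<forall>i\<in>S j. u i \<bullet> z = 0" and y: "y \<in> affine hull (face_cut N u c (S j))"
    for j y t z
  proof -
    define T where "T = S (1 - j)"
    have ST: "S j \<union> T = {0..N}" "S j \<inter> T = {}" using part j unfolding T_def by auto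
    have Tne: "T \<noteq> {}" using ne j unfolding T_def by auto
    have finT: "finite T" using ST by (metis finite_Un finite_atLeastAtMost)
    have cT: "real (card T) > 0" using Tne finT by (simp add: card_gt_0_iff)
    define q where "q = (1 / real (card T)) *\<^sub>R (\<Sum>k\<in>T. vx k)"
    have uq: "u i \<bullet> q = (\<Sum>k\<in>T. u i \<bullet> vx k) / real (card T)" for i
      unfolding q_def by (simp add: inner_sum_right)
    have qS: "u i \<bullet> q = c i" if i: "i \<in> S j" for i
    proof -
      have "(\<Sum>k\<in>T. u i \<bullet> vx k) = (\<Sum>k\<in>T. c i)"
        by (rule sum.cong) (use ST i in \<open>auto intro!: vx_eq\<close>)
      then show ?thesis using uq cT by simp
    qed
    have qT: "c i < u i \<bullet> q" if i: "i \<in> T" for i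
    proof -
      have "(\<Sum>k\<in>T. c i) < (\<Sum>k\<in>T. u i \<bullet> vx k)"
        by (rule sum_strict_mono_ex1) (use finT ST i in \<open>auto intro!: vx_ge vx_str\<close>)
      then have "real (card T) * c i < (\<Sum>k\<in>T. u i \<bullet> vx k)" by simp
      moreover have "real (card T) * (u i \<bullet> q) = (\<Sum>k\<in>T. u i \<bullet> vx k)" using uq[of i] cT by simp
      ultimately have "real (card T) * c i < real (card T) * (u i \<bullet> q)" by simp
      then show ?thesis using cT mult_less_cancel_left_pos by blast
    qed
    define m where "m = Min ((\<lambda>k. u k \<bullet> q - c k) ` T)"
    have m0: "m > 0" unfolding m_def using finT Tne qT by (simp add: Min_gr_iff)
    have mle: "m \<le> u k \<bullet> q - c k" if "k \<in> T" for k unfolding m_def using finT that by simp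
    define d where "d = m / (norm z + 1)"
    have p1: "0 < norm z + 1" by (metis norm_ge_zero add_nonneg_pos zero_less_one)
    have d0: "d > 0" unfolding d_def using m0 p1 by simp
    have dz: "d * norm z \<le> m"
    proof -
      have "norm z / (norm z + 1) \<le> 1" using p1 by (simp add: divide_le_eq_1)
      then have "m * (norm z / (norm z + 1)) \<le> m * 1" using m0 by (intro mult_left_mono) auto
      moreover have "m * (norm z / (norm z + 1)) = d * norm z" unfolding d_def by simp
      ultimately show ?thesis by simp
    qed
    have inF: "q + s *\<^sub>R z \<in> face_cut N u c (S j)" if s: "\<bar>s\<bar> = d" for s
    proof -
      have "c i \<le> u i \<bullet> (q + s *\<^sub>R z)" if i: "i \<in> {0..N}" for i
      proof (cases "i \<in> S j")
        case True then show ?thesis using qS z by (simp add: inner_add_right)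
      next
        case False
        then have iT: "i \<in> T" using ST i by auto
        have "\<bar>u i \<bullet> z\<bar> \<le> norm (u i) * norm z" by (rule Cauchy_Schwarz_ineq2)
        then have "\<bar>u i \<bullet> z\<bar> \<le> norm z" using hn i by simp
        then have "\<bar>s * (u i \<bullet> z)\<bar> \<le> d * norm z" using s d0 by (simp add: abs_mult mult_left_mono)
        then have "- m \<le> s * (u i \<bullet> z)" using dz by linarith
        then show ?thesis using mle[OF iT] by (simp add: inner_add_right)
      qed
      moreover have "\<forall>i\<in>S j. u i \<bullet> (q + s *\<^sub>R z) = c i" using qS z by (simp add: inner_add_right)
      ultimately show ?thesis unfolding face_cut_def simplex_of_def by auto
    qed
    have q1: "q + d *\<^sub>R z \<in> affine hull (face_cut N u c (S j))"
      using inF[of d] d0 hull_inc by (metis abs_of_pos)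
    have q2: "q - d *\<^sub>R z \<in> affine hull (face_cut N u c (S j))"
      using inF[of "-d"] d0 hull_inc by (metis abs_minus_cancel abs_of_pos scaleR_minus_left diff_conv_add_uminus)
    show ?thesis using aff_move[OF affine_affine_hull y q1 q2 d0] .
  qed
  define v where "v = x 1 - x 0"
  have perp: "v \<bullet> z = 0" if j: "j \<in> {0,1}" and z: "\<forall>i\<in>S j. u i \<bullet> z = 0" for j z
  proof (rule min_orth, intro allI)
    fix t
    show "norm v \<le> norm (v - t *\<^sub>R z)"
    proof (cases "j = 0")
      case True
      have "x 0 + t *\<^sub>R z \<in> affine hull (face_cut N u c (S 0))" using dir[of 0 z "x 0" t] z True closest by simp
      then have "dist (x 0) (x 1) \<le> dist (x 0 + t *\<^sub>R z) (x 1)" using closest by blast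
      then show ?thesis unfolding v_def dist_norm by (simp add: norm_minus_commute algebra_simps)
    next
      case False
      then have j1: "j = 1" using j by auto
      have "x 1 + (-t) *\<^sub>R z \<in> affine hull (face_cut N u c (S 1))" using dir[of 1 z "x 1" "-t"] z j1 closest by simp
      then have "dist (x 0) (x 1) \<le> dist (x 0) (x 1 + (-t) *\<^sub>R z)" using closest by blast
      then show ?thesis unfolding v_def dist_norm by (simp add: norm_minus_commute algebra_simps)
    qed
  qed
  have vspan: "v = (\<Sum>i\<in>S j. (u i \<bullet> v) *\<^sub>R u i)" if j: "j \<in> {0,1}" for j
    by (rule in_span_orth) (use finS[OF j] hn Ssub[OF j] orth[OF j] perp[OF j] in auto)
  have bip: "bip_inv u c (S j) y = y - (\<Sum>i\<in>S j. (2 * (u i \<bullet> y - c i)) *\<^sub>R u i)" if j: "j \<in> {0,1}" for j y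
  proof -
    have "bip_inv u c (S j) y = y - (\<Sum>i\<in>set (sorted_list_of_set (S j)). (2 * (u i \<bullet> y - c i)) *\<^sub>R u i)"
      unfolding bip_inv_def
      by (rule foldr_refl) (use finS[OF j] hn Ssub[OF j] orth[OF j] in auto)
    then show ?thesis using finS[OF j] by simp
  qed
  have refl_line: "bip_inv u c (S j) (x j + s *\<^sub>R v) = x j - s *\<^sub>R v" if j: "j \<in> {0,1}" for j s
  proof -
    have "(\<Sum>i\<in>S j. (2 * (u i \<bullet> (x j + s *\<^sub>R v) - c i)) *\<^sub>R u i) = (\<Sum>i\<in>S j. (2 * s) *\<^sub>R ((u i \<bullet> v) *\<^sub>R u i))"
      by (rule sum.cong) (use xV[OF j] in \<open>auto simp: inner_add_right algebra_simps\<close>)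
    also have "\<dots> = (2 * s) *\<^sub>R v" using vspan[OF j] by (metis scaleR_sum_right)
    finally have hs: "(\<Sum>i\<in>S j. (2 * (u i \<bullet> (x j + s *\<^sub>R v) - c i)) *\<^sub>R u i) = (2 * s) *\<^sub>R v" .
    have "bip_inv u c (S j) (x j + s *\<^sub>R v) = (x j + s *\<^sub>R v) - (2 * s) *\<^sub>R v"
      unfolding bip[OF j] hs ..
    also have "\<dots> = x j - s *\<^sub>R v"
    proof -
      have "(2 * s) *\<^sub>R v = s *\<^sub>R v + s *\<^sub>R v" by (metis mult_2 scaleR_add_left)
      then show ?thesis by (simp only:) (simp add: algebra_simps)
    qed
    finally show ?thesis .
  qed
  define L where "L = affine hull {x 0, x 1}"
  have L: "L = range (\<lambda>t. x 0 + t *\<^sub>R v)" unfolding L_def v_def by (rule affine_hull_2_alt)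
  have xL: "x j \<in> L" if "j \<in> {0,1}" for j using that unfolding L_def by (auto intro: hull_inc)
  have onL: "\<exists>s. y = x j + s *\<^sub>R v" if j: "j \<in> {0,1}" and y: "y \<in> L" for j y
  proof -
    obtain t where t: "y = x 0 + t *\<^sub>R v" using y L by auto
    show ?thesis
    proof (cases "j = 0")
      case True then show ?thesis using t by blast
    next
      case False
      then have "j = 1" using j by auto
      moreover have "y = x 1 + (t - 1) *\<^sub>R v" using t unfolding v_def by (simp add: algebra_simps)
      ultimately show ?thesis by blast
    qed
  qed
  have formula: "bip_inv u c (S j) y = 2 *\<^sub>R x j - y" if j: "j \<in> {0,1}" and y: "y \<in> L" for j y
  proof -
    obtain s where s: "y = x j + s *\<^sub>R v" using onL[OF j y] by blast
    show ?thesis using refl_line[OF j, of s] s by (simp add: algebra_simps scaleR_2)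
  qed
  have symL: "2 *\<^sub>R x j - y \<in> L" if j: "j \<in> {0,1}" and y: "y \<in> L" for j y
  proof -
    have "affine L" unfolding L_def by simp
    then have "2 *\<^sub>R x j + (-1) *\<^sub>R y \<in> L"
      using \<open>affine L\<close>[unfolded affine_def, rule_format, OF xL[OF j] y, of 2 "-1"] by simp
    then show ?thesis by simp
  qed
  show ?thesis unfolding L_def[symmetric]
  proof (rule ballI)
    fix j :: nat assume j: "j \<in> {0,1}"
    show "bip_inv u c (S j) ` L = L \<and> (\<forall>y\<in>L. bip_inv u c (S j) y = 2 *\<^sub>R x j - y) \<and> {y \<in> L. bip_inv u c (S j) y = y} = {x j}"
    proof (intro conjI)
    show "bip_inv u c (S j) ` L = L"
    proof
      show "bip_inv u c (S j) ` L \<subseteq> L" using formula[OF j] symL[OF j] by auto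
      show "L \<subseteq> bip_inv u c (S j) ` L"
      proof
        fix y assume y: "y \<in> L"
        have "bip_inv u c (S j) (2 *\<^sub>R x j - y) = y" using formula[OF j symL[OF j y]] by simp
        then show "y \<in> bip_inv u c (S j) ` L" using symL[OF j y] by (metis image_eqI)
      qed
    qed
    show "\<forall>y\<in>L. bip_inv u c (S j) y = 2 *\<^sub>R x j - y" using formula[OF j] by blast
    show "{y \<in> L. bip_inv u c (S j) y = y} = {x j}"
    proof
      show "{y \<in> L. bip_inv u c (S j) y = y} \<subseteq> {x j}"
      proof
        fix y assume "y \<in> {y \<in> L. bip_inv u c (S j) y = y}"
        then have "y \<in> L" "2 *\<^sub>R x j - y = y" using formula[OF j] by auto
        then have "2 *\<^sub>R (x j - y) = 0" by (simp add: algebra_simps scaleR_2)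
        then show "y \<in> {x j}" by simp
      qed
      show "{x j} \<subseteq> {y \<in> L. bip_inv u c (S j) y = y}"
        using xL[OF j] formula[OF j xL[OF j]] by (simp add: scaleR_2)
    qed
    qed
  qed
qed


end
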